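(* Let $D\subset\mathbb{C}$ be an open disk centered at $0$, $f_1,\dots,f_p:D\to\mathbb{C}$ analytic, $A_1,\dots,A_p\in\mathbb{C}^{n\times n}$ with $M(\lambda)=\sum_{m=1}^p f_m(\lambda)A_m$ satisfying $M(\lambda)^T=M(\lambda)$ on $D$, and $M_j:=M^{(j)}(0)=\sum_{m=1}^pf_m^{(j)}(0)A_m$. Let $\mathbf{C}=[c_{i,j}]$ be the infinite matrix determined by $c_{i,1}=1/(i+1)$ ($i\ge1$) and $c_{i-1,j}=\frac{j}{i}c_{i,j-1}$ ($i,j>1$); let $\mathbf{S}$ be the infinite block matrix with $S_{1,1}=I$, $S_{1,j}=S_{j,1}=0$ ($j\ge2$), $S_{i,j}=c_{i-1,j-1}M_{i+j-2}$ ($i,j\ge2$); let $\mathbf{A}=\operatorname{diag}(-M_0,I,I,\dots)$; and let $\mathbf{B}$ have first block row $(M_1,\frac12M_2,\frac13M_3,\dots)$, blocks $\frac1jI$ in positions $(j+1,j)$, zeros elsewhere. $[\mathbf{X}]_N$ denotes the leading $N\times N$ block submatrix. Let $k+1\le N$, assume $[\mathbf{S}]_{2N}$ and $[\mathbf{S}\mathbf{A}]_N$ are invertible, let $q_k\in\mathbb{C}^{Nn}$ have only its first $k$ blocks (in $\mathbb{C}^n$) nonzero, and let $w=[\mathbf{S}\mathbf{A}]_N^{-1}[\mathbf{S}\mathbf{B}]_Nq_k$; only the first $k+1$ blocks of $w$ are nonzero, and let $W\in\mathbb{C}^{n\times(k+1)}$ have these blocks as columns. Let $z=[\mathbf{S}\mathbf{B}]_Nw$.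 Then the first $k+1$ blocks of $z$, forming the columns of $Z=[z_1,\dots,z_{k+1}]$, satisfy $$Z=\sum_{m=1}^pA_mW\,(G_{k+1}\circ F_m),$$ where $G_{k+1}\in\mathbb{R}^{(k+1)\times(k+1)}$ has entries $g_{j,1}=g_{1,j}=1/j$ for $j=1,\dots,k+1$ and $g_{i,j}=c_{i-1,j}/j$ for $i,j\ge2$, and $F_m\in\mathbb{C}^{(k+1)\times(k+1)}$ is the Hankel matrix with $(i,j)$ entry $f_m^{(i+j-1)}(0)$.
   Context: $\circ$ denotes the Hadamard (entrywise) product. Transpose is non-conjugate. *)

theory Defs
  imports "HOL-Complex_Analysis.Complex_Analysis" "Jordan_Normal_Form.Matrix"
begin

text \<open>Infinite (scalar) matrices are functions nat => nat => complex (0-based scalar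
 indices). Infinite block matrices with n x n blocks are given by a block function
 with 1-based block indices and converted to scalar form.\<close>

type_synonym imat = "nat \<Rightarrow> nat \<Rightarrow> complex"

definition blocks_to_imat :: "nat \<Rightarrow> (nat \<Rightarrow> nat \<Rightarrow> complex mat) \<Rightarrow> imat" where
  "blocks_to_imat n blk = (\<lambda>r s. blk (r div n + 1) (s div n + 1) $$ (r mod n, s mod n))"

definition imat_mult :: "imat \<Rightarrow> imat \<Rightarrow> imat" where
  "imat_mult X Y = (\<lambda>r s. infsum (\<lambda>l. X r l * Y l s) UNIV)"

definition lead :: "nat \<Rightarrow> nat \<Rightarrow> imat \<Rightarrow> complex mat" where
  "lead n N X = mat (N * n) (N * n) (\<lambda>(r, s). X r s)"

definition minv :: "complex mat \<Rightarrow> complex mat" where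
  "minv X = (SOME B. B \<in> carrier_mat (dim_row X) (dim_row X) \<and> inverts_mat X B \<and> inverts_mat B X)"

definition hadamard :: "'a::times mat \<Rightarrow> 'a mat \<Rightarrow> 'a mat" (infixl "\<circ>\<^sub>h" 70) where
  "hadamard X Y = mat (dim_row X) (dim_col X) (\<lambda>ij. X $$ ij * Y $$ ij)"

definition msum :: "nat \<Rightarrow> nat \<Rightarrow> ('b \<Rightarrow> 'a::comm_monoid_add mat) \<Rightarrow> 'b set \<Rightarrow> 'a mat" where
  "msum nr nc F I = mat nr nc (\<lambda>ij. \<Sum>m\<in>I. F m $$ ij)"

text \<open>The coefficients c_{i,j} (i,j >= 1): c_{i,1} = 1/(i+1) and
 c_{i-1,j} = j/i * c_{i,j-1}, i.e. c_{i,j} = j/(i+1) * c_{i+1,j-1} for j >= 2.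
 The value at j = 0 is irrelevant.\<close>
fun ccoef :: "nat \<Rightarrow> nat \<Rightarrow> real" where
  "ccoef i 0 = 0"
| "ccoef i (Suc 0) = 1 / real (i + 1)"
| "ccoef i (Suc (Suc j)) = real (Suc (Suc j)) / real (i + 1) * ccoef (i + 1) (Suc j)"

definition Mfun :: "nat \<Rightarrow> nat \<Rightarrow> (nat \<Rightarrow> complex \<Rightarrow> complex) \<Rightarrow> (nat \<Rightarrow> complex mat) \<Rightarrow> complex \<Rightarrow> complex mat" where
  "Mfun n p f A x = msum n n (\<lambda>m. f m x \<cdot>\<^sub>m A m) {1..p}"

definition Mder :: "nat \<Rightarrow> nat \<Rightarrow> (nat \<Rightarrow> complex \<Rightarrow> complex) \<Rightarrow> (nat \<Rightarrow> complex mat) \<Rightarrow> nat \<Rightarrow> complex mat" where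
  "Mder n p f A j = msum n n (\<lambda>m. (deriv ^^ j) (f m) 0 \<cdot>\<^sub>m A m) {1..p}"

definition S_blk :: "nat \<Rightarrow> (nat \<Rightarrow> complex mat) \<Rightarrow> nat \<Rightarrow> nat \<Rightarrow> complex mat" where
  "S_blk n Md i j =
     (if i = 1 \<and> j = 1 then 1\<^sub>m n
      else if i = 1 \<or> j = 1 then 0\<^sub>m n n
      else complex_of_real (ccoef (i - 1) (j - 1)) \<cdot>\<^sub>m Md (i + j - 2))"

definition A_blk :: "nat \<Rightarrow> (nat \<Rightarrow> complex mat) \<Rightarrow> nat \<Rightarrow> nat \<Rightarrow> complex mat" where
  "A_blk n Md i j =
     (if i = j then (if i = 1 then - Md 0 else 1\<^sub>m n) else 0\<^sub>m n n)"

definition B_blk :: "nat \<Rightarrow> (nat \<Rightarrow> complex mat) \<Rightarrow> nat \<Rightarrow> nat \<Rightarrow> complex mat" where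
  "B_blk n Md i j =
     (if i = 1 then complex_of_real (1 / real j) \<cdot>\<^sub>m Md j
      else if i = j + 1 then complex_of_real (1 / real j) \<cdot>\<^sub>m 1\<^sub>m n
      else 0\<^sub>m n n)"

text \<open>G_{k+1} (0-based JNF indices a,b correspond to paper indices a+1,b+1).\<close>
definition Gmat :: "nat \<Rightarrow> complex mat" where
  "Gmat K = mat K K (\<lambda>(a, b). let i = a + 1; j = b + 1 in
     if i = 1 then complex_of_real (1 / real j)
     else if j = 1 then complex_of_real (1 / real i)
     else complex_of_real (ccoef (i - 1) j / real j))"

definition Fmat :: "nat \<Rightarrow> (complex \<Rightarrow> complex) \<Rightarrow> complex mat" where
  "Fmat K g = mat K K (\<lambda>(a, b). (deriv ^^ ((a + 1) + (b + 1) - 1)) g 0)"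

definition block_cols :: "nat \<Rightarrow> nat \<Rightarrow> complex vec \<Rightarrow> complex mat" where
  "block_cols n K v = mat n K (\<lambda>(a, b). v $ (b * n + a))"

end

theory Submission
  imports Defs
begin

lemma infsum_fin:
  fixes g :: "nat \<Rightarrow> complex"
  assumes "finite F" "\<And>l. l \<notin> F \<Longrightarrow> g l = 0"
  shows "infsum g UNIV = sum g F"
proof -
  have "infsum g UNIV = infsum g F"
    by (rule infsum_cong_neutral) (use assms in auto)
  then show ?thesis using assms by simp
qed

lemma ccoef_closed: "j \<ge> 1 \<Longrightarrow> ccoef i j = fact i * fact j / fact (i + j)"
proof (induction j arbitrary: i rule: less_induct)
  case (less j)
  show ?case
  proof (cases j)
    case 0 then show ?thesis using less by simp
  next
    case (Suc j')
    show ?thesis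
    proof (cases j')
      case 0
      have "(0::real) < fact i" by simp
      then have "fact i + fact i * real i \<noteq> 0" by (smt (verit) mult_nonneg_nonneg of_nat_0_le_iff)
      then show ?thesis using Suc 0 by (simp add: field_simps)
    next
      case (Suc j'')
      have IH: "ccoef (i+1) (Suc j'') = fact (i+1) * fact (Suc j'') / fact (i + 1 + Suc j'')"
        using less.IH[of "Suc j''" "i+1"] \<open>j = Suc j'\<close> Suc by simp
      have "ccoef i j = real (Suc (Suc j'')) / real (i + 1) * ccoef (i + 1) (Suc j'')"
        using \<open>j = Suc j'\<close> Suc by simp
      also have "\<dots> = fact i * fact j / fact (i + j)"
        unfolding IH using \<open>j = Suc j'\<close> Suc
        by (simp add: field_simps fact_Suc del: of_nat_Suc)
      finally show ?thesis .
    qed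
  qed
qed

lemma ccoef_sym: "ccoef j0 (i0+1) / real (i0+1) = ccoef i0 (j0+1) / real (j0+1)"
  by (simp add: ccoef_closed field_simps fact_Suc del: of_nat_Suc)

lemma Gmat_entry: "j0 < K \<Longrightarrow> i0 < K \<Longrightarrow> Gmat K $$ (j0, i0) =
   (if i0 = 0 then complex_of_real (1 / real (j0+1)) else complex_of_real (ccoef i0 (j0+1) / real (j0+1)))"
  unfolding Gmat_def using ccoef_sym[of j0 i0] by (auto simp: Let_def)

lemma divmod_eq_iff: "0 < (n::nat) \<Longrightarrow> (l div n = s div n \<and> l mod n = s mod n) = (l = s)"
  by (metis div_mult_mod_eq)

lemma Asc_ge:
  assumes "0 < n" "n \<le> s"
  shows "blocks_to_imat n (A_blk n Md) l s = (if l = s then 1 else 0)"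
proof -
  have "s div n \<noteq> 0" using assms by (simp add: div_eq_0_iff)
  then show ?thesis using assms divmod_eq_iff[of n l s]
    by (auto simp: blocks_to_imat_def A_blk_def)
qed

lemma Asc_lt:
  assumes "0 < n" "s < n" "Md 0 \<in> carrier_mat n n"
  shows "blocks_to_imat n (A_blk n Md) l s = (if l < n then - Md 0 $$ (l, s) else 0)"
  using assms by (auto simp: blocks_to_imat_def A_blk_def div_eq_0_iff)

lemma Ssc:
  assumes "0 < n" "\<And>j. Md j \<in> carrier_mat n n"
  shows "blocks_to_imat n (S_blk n Md) r s =
    (if r < n \<and> s < n then (if r = s then 1 else 0) else if r < n \<or> s < n then 0
     else complex_of_real (ccoef (r div n) (s div n)) * Md (r div n + s div n) $$ (r mod n, s mod n))"
proof -
  have "\<And>j. dim_row (Md j) = n" "\<And>j. dim_col (Md j) = n" using assms(2) by auto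
  then show ?thesis using assms by (auto simp: blocks_to_imat_def S_blk_def div_eq_0_iff)
qed

lemma Bsc:
  assumes "0 < n" "\<And>j. Md j \<in> carrier_mat n n"
  shows "blocks_to_imat n (B_blk n Md) l s =
    (if l < n then complex_of_real (1 / real (s div n + 1)) * Md (s div n + 1) $$ (l, s mod n)
     else if l = s + n then complex_of_real (1 / real (s div n + 1)) else 0)"
proof -
  have "(l div n = s div n + 1 \<and> l mod n = s mod n) = (l = s + n)"
    using divmod_eq_iff[of n l "s+n"] assms by simp
  moreover have "\<And>j. dim_row (Md j) = n" "\<And>j. dim_col (Md j) = n" using assms(2) by auto
  ultimately show ?thesis using assms
    by (auto simp: blocks_to_imat_def B_blk_def div_eq_0_iff)
qed

lemma Asc:
  assumes "0 < n" "Md 0 \<in> carrier_mat n n"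
  shows "blocks_to_imat n (A_blk n Md) l s = (if s < n then (if l < n then - Md 0 $$ (l, s) else 0) else (if l = s then 1 else 0))"
  using Asc_lt[where l=l and s=s and Md=Md] Asc_ge[where l=l and s=s and Md=Md] assms by (cases "s < n") auto

lemma U_entry:
  assumes n: "0 < n" and Md: "\<And>j. Md j \<in> carrier_mat n n"
  shows "imat_mult (blocks_to_imat n (S_blk n Md)) (blocks_to_imat n (A_blk n Md)) r s =
     (if s < n then (if r < n then - Md 0 $$ (r, s) else 0) else blocks_to_imat n (S_blk n Md) r s)"
proof -
  let ?S = "blocks_to_imat n (S_blk n Md)" and ?A = "blocks_to_imat n (A_blk n Md)"
  have "imat_mult ?S ?A r s = (\<Sum>l\<in>{..<n} \<union> {s}. ?S r l * ?A l s)"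
    unfolding imat_mult_def
    by (rule infsum_fin) (use n Md in \<open>auto simp: Asc\<close>)
  also have "\<dots> = (if s < n then (if r < n then - Md 0 $$ (r, s) else 0) else ?S r s)"
  proof (cases "s < n")
    case True
    then have e: "{..<n} \<union> {s} = {..<n}" by auto
    show ?thesis
    proof (cases "r < n")
      case True2: True
      have "(\<Sum>l<n. ?S r l * ?A l s) = (\<Sum>l<n. if l = r then - Md 0 $$ (r, s) else 0)"
        by (rule sum.cong) (use n Md True True2 in \<open>auto simp: Ssc Asc\<close>)
      then show ?thesis unfolding e using True True2 by simp
    next
      case False2: False
      have "(\<Sum>l<n. ?S r l * ?A l s) = 0"
        by (rule sum.neutral) (use n Md True False2 in \<open>auto simp: Ssc Asc\<close>)
      then show ?thesis unfolding e using True False2 by simp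
    qed
  next
    case False
    then have "(\<Sum>l\<in>{..<n} \<union> {s}. ?S r l * ?A l s) = (\<Sum>l\<in>{s}. ?S r l * ?A l s)"
      by (intro sum.mono_neutral_right) (use n Md in \<open>auto simp: Asc_ge\<close>)
    then show ?thesis using False n Md by (simp add: Asc_ge)
  qed
  finally show ?thesis .
qed

lemma T_entry:
  assumes n: "0 < n" and Md: "\<And>j. Md j \<in> carrier_mat n n"
  shows "imat_mult (blocks_to_imat n (S_blk n Md)) (blocks_to_imat n (B_blk n Md)) r s =
     (if r < n then complex_of_real (1 / real (s div n + 1)) * Md (s div n + 1) $$ (r, s mod n)
      else complex_of_real (1 / real (s div n + 1)) * blocks_to_imat n (S_blk n Md) r (s + n))"
proof -
  let ?S = "blocks_to_imat n (S_blk n Md)" and ?B = "blocks_to_imat n (B_blk n Md)"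
  have "imat_mult ?S ?B r s = (\<Sum>l\<in>{..<n} \<union> {s+n}. ?S r l * ?B l s)"
    unfolding imat_mult_def
    by (rule infsum_fin) (use n Md in \<open>auto simp: Bsc\<close>)
  also have "\<dots> = (\<Sum>l<n. ?S r l * ?B l s) + ?S r (s+n) * ?B (s+n) s"
    by (subst sum.union_disjoint) auto
  also have "\<dots> = (if r < n then complex_of_real (1 / real (s div n + 1)) * Md (s div n + 1) $$ (r, s mod n)
      else complex_of_real (1 / real (s div n + 1)) * ?S r (s + n))"
  proof (cases "r < n")
    case True
    have "(\<Sum>l<n. ?S r l * ?B l s) = (\<Sum>l<n. if l = r then ?B l s else 0)"
      by (rule sum.cong) (use n Md True in \<open>auto simp: Ssc\<close>)
    also have "\<dots> = ?B r s" using True by simp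
    finally show ?thesis using True n Md by (simp add: Ssc Bsc)
  next
    case False
    have "(\<Sum>l<n. ?S r l * ?B l s) = 0"
      by (rule sum.neutral) (use n Md False in \<open>auto simp: Ssc\<close>)
    then show ?thesis using False n Md by (simp add: Bsc mult.commute)
  qed
  finally show ?thesis .
qed

lemma minv_props:
  assumes "invertible_mat X" "X \<in> carrier_mat d d"
  shows "minv X \<in> carrier_mat d d \<and> minv X * X = 1\<^sub>m d \<and> X * minv X = 1\<^sub>m d"
proof -
  obtain B where B: "inverts_mat X B" "inverts_mat B X" using assms unfolding invertible_mat_def by blast
  have "dim_col (X * B) = d" using B(1) assms(2) unfolding inverts_mat_def by (metis carrier_matD(1) index_one_mat(3))
  hence c1: "dim_col B = d" by simp
  have "dim_row B = d" using B(2) assms(2) unfolding inverts_mat_def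
    by (metis carrier_matD(2) index_mult_mat(3) index_one_mat(3))
  hence "B \<in> carrier_mat (dim_row X) (dim_row X) \<and> inverts_mat X B \<and> inverts_mat B X"
    using c1 B assms(2) by auto
  hence ex: "\<exists>B. B \<in> carrier_mat (dim_row X) (dim_row X) \<and> inverts_mat X B \<and> inverts_mat B X" by blast
  have "minv X \<in> carrier_mat (dim_row X) (dim_row X) \<and> inverts_mat X (minv X) \<and> inverts_mat (minv X) X"
    unfolding minv_def by (rule someI_ex[OF ex])
  then show ?thesis using assms(2) unfolding inverts_mat_def by auto
qed

lemma sum_blocks: "(\<Sum>s<m*n. h s) = (\<Sum>j<m. \<Sum>b<n. h (j*n+b :: nat))"
proof -
  have "(\<Sum>s<m*n. h s) = (\<Sum>j<m. sum h {j*n..<j*n+n})" by (rule sum.nat_group[symmetric])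
  also have "\<dots> = (\<Sum>j<m. \<Sum>b<n. h (j*n+b))"
  proof (rule sum.cong[OF refl])
    fix j
    have "sum h {0 + j*n..<n + j*n} = (\<Sum>b\<in>{0..<n}. h (b + j*n))" by (rule sum.shift_bounds_nat_ivl)
    then show "sum h {j*n..<j*n+n} = (\<Sum>b<n. h (j*n+b))" by (simp add: atLeast0LessThan add.commute)
  qed
  finally show ?thesis .
qed

lemma mult_vec_entry: "A \<in> carrier_mat nr nc \<Longrightarrow> v \<in> carrier_vec nc \<Longrightarrow> i < nr \<Longrightarrow>
  (A *\<^sub>v v) $ i = (\<Sum>s<nc. A $$ (i, s) * v $ s)"
  by (auto simp: scalar_prod_def atLeast0LessThan intro!: sum.cong)

lemma mult_mat_entry: "A \<in> carrier_mat nr nc \<Longrightarrow> B \<in> carrier_mat nc nd \<Longrightarrow> i < nr \<Longrightarrow> j < nd \<Longrightarrow>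
  (A * B) $$ (i, j) = (\<Sum>s<nc. A $$ (i, s) * B $$ (s, j))"
  by (auto simp: scalar_prod_def atLeast0LessThan intro!: sum.cong)

theorem theorem4:
  fixes n p N k :: nat and R :: real
    and f :: "nat \<Rightarrow> complex \<Rightarrow> complex"
    and A :: "nat \<Rightarrow> complex mat"
    and q :: "complex vec"
  assumes R: "R > 0"
    and hol: "\<And>m. m \<in> {1..p} \<Longrightarrow> f m holomorphic_on ball 0 R"
    and Adim: "\<And>m. m \<in> {1..p} \<Longrightarrow> A m \<in> carrier_mat n n"
    and sym: "\<And>x. x \<in> ball 0 R \<Longrightarrow> transpose_mat (Mfun n p f A x) = Mfun n p f A x"
    and kN: "k + 1 \<le> N"
    and invS: "invertible_mat (lead n (2 * N) (blocks_to_imat n (S_blk n (Mder n p f A))))"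
    and invSA: "invertible_mat (lead n N (imat_mult (blocks_to_imat n (S_blk n (Mder n p f A)))
                                                   (blocks_to_imat n (A_blk n (Mder n p f A)))))"
    and qdim: "q \<in> carrier_vec (N * n)"
    and qsupp: "\<And>r. k * n \<le> r \<Longrightarrow> r < N * n \<Longrightarrow> q $ r = 0"
  shows
    "let Md = Mder n p f A;
         S = blocks_to_imat n (S_blk n Md);
         SA = lead n N (imat_mult S (blocks_to_imat n (A_blk n Md)));
         SB = lead n N (imat_mult S (blocks_to_imat n (B_blk n Md)));
         w = minv SA *\<^sub>v (SB *\<^sub>v q);
         W = block_cols n (k + 1) w;
         z = SB *\<^sub>v w;
         Z = block_cols n (k + 1) z
     in (\<forall>r. (k + 1) * n \<le> r \<and> r < N * n \<longrightarrow> w $ r = 0) \<and>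
        Z = msum n (k + 1) (\<lambda>m. A m * W * (Gmat (k + 1) \<circ>\<^sub>h Fmat (k + 1) (f m))) {1..p}"
proof (cases "n = 0")
  case True
  show ?thesis unfolding Let_def True
    by (auto intro!: eq_matI simp: block_cols_def msum_def)
next
  case False
  then have n: "0 < n" by simp
  define Md where "Md = Mder n p f A"
  have Md: "\<And>j. Md j \<in> carrier_mat n n" by (simp add: Md_def Mder_def msum_def)
  define S where "S = blocks_to_imat n (S_blk n Md)"
  define U where "U = imat_mult S (blocks_to_imat n (A_blk n Md))"
  define T where "T = imat_mult S (blocks_to_imat n (B_blk n Md))"
  define SA where "SA = lead n N U"
  define SB where "SB = lead n N T"
  define w where "w = minv SA *\<^sub>v (SB *\<^sub>v q)"
  define W where "W = block_cols n (k + 1) w"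
  define z where "z = SB *\<^sub>v w"
  define Z where "Z = block_cols n (k + 1) z"
  have Uf: "\<And>r s. U r s = (if s < n then (if r < n then - Md 0 $$ (r, s) else 0) else S r s)"
    unfolding U_def S_def by (rule U_entry[OF n Md])
  have Tf: "\<And>r s. T r s = (if r < n then complex_of_real (1 / real (s div n + 1)) * Md (s div n + 1) $$ (r, s mod n)
      else complex_of_real (1 / real (s div n + 1)) * S r (s + n))"
    unfolding T_def S_def by (rule T_entry[OF n Md])
  have Sf: "\<And>r s. S r s = (if r < n \<and> s < n then (if r = s then 1 else 0) else if r < n \<or> s < n then 0
     else complex_of_real (ccoef (r div n) (s div n)) * Md (r div n + s div n) $$ (r mod n, s mod n))"
    unfolding S_def by (rule Ssc[OF n Md])
  have SAc: "SA \<in> carrier_mat (N*n) (N*n)" and SAe: "\<And>r s. r < N*n \<Longrightarrow> s < N*n \<Longrightarrow> SA $$ (r,s) = U r s"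
    by (auto simp: SA_def lead_def)
  have SBc: "SB \<in> carrier_mat (N*n) (N*n)" and SBe: "\<And>r s. r < N*n \<Longrightarrow> s < N*n \<Longrightarrow> SB $$ (r,s) = T r s"
    by (auto simp: SB_def lead_def)
  have inv: "invertible_mat SA" using invSA unfolding SA_def U_def S_def Md_def .
  obtain Bi where Bi: "Bi \<in> carrier_mat (N*n) (N*n)" "Bi * SA = 1\<^sub>m (N*n)" "SA * Bi = 1\<^sub>m (N*n)"
    and Bidef: "minv SA = Bi"
    using minv_props[OF inv SAc] by blast
  have SBqc: "SB *\<^sub>v q \<in> carrier_vec (N*n)" using SBc qdim by auto
  have wc: "w \<in> carrier_vec (N*n)" unfolding w_def Bidef using Bi SBqc by auto
  have SAw: "SA *\<^sub>v w = SB *\<^sub>v q"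
  proof -
    have "SA *\<^sub>v w = (SA * Bi) *\<^sub>v (SB *\<^sub>v q)" unfolding w_def Bidef
      using assoc_mult_mat_vec[OF SAc Bi(1) SBqc] by simp
    also have "\<dots> = SB *\<^sub>v q" using Bi(3) SBqc by simp
    finally show ?thesis .
  qed
  have inj: "\<And>u. u \<in> carrier_vec (N*n) \<Longrightarrow> SA *\<^sub>v u = 0\<^sub>v (N*n) \<Longrightarrow> u = 0\<^sub>v (N*n)"
  proof -
    fix u :: "complex vec" assume uc: "u \<in> carrier_vec (N*n)" and u0: "SA *\<^sub>v u = 0\<^sub>v (N*n)"
    have "u = (Bi * SA) *\<^sub>v u" using Bi(2) uc by simp
    also have "\<dots> = Bi *\<^sub>v (SA *\<^sub>v u)" using assoc_mult_mat_vec[OF Bi(1) SAc uc] .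
    also have "\<dots> = 0\<^sub>v (N*n)" unfolding u0 using Bi(1) by (intro eq_vecI) (auto simp: scalar_prod_def)
    finally show "u = 0\<^sub>v (N*n)" .
  qed
  define yy where "yy s = (if s - n < k*n then q $ (s-n) / of_nat (s div n) else 0)" for s
  define u where "u = vec (N*n) (\<lambda>s. if s < n then 0 else w $ s - yy s)"
  have kn: "k*n + n \<le> N*n" using kN by (metis add.commute add_mult_distrib mult_1 mult_le_mono1)
  have SBq: "(SB *\<^sub>v q) $ r = (\<Sum>s<N*n. if s < n then 0 else S r s * yy s)" if r: "r < N*n" "n \<le> r" for r
  proof -
    have "(SB *\<^sub>v q) $ r = (\<Sum>s<N*n. T r s * q $ s)" using mult_vec_entry[OF SBc qdim r(1)] SBe r(1) by simp
    also have "\<dots> = (\<Sum>s<N*n. complex_of_real (1 / real (s div n + 1)) * S r (s + n) * q $ s)"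
      by (rule sum.cong) (use r in \<open>auto simp: Tf\<close>)
    also have "\<dots> = (\<Sum>s<k*n. complex_of_real (1 / real (s div n + 1)) * S r (s + n) * q $ s)"
      by (rule sum.mono_neutral_right) (use kn qsupp kN in auto)
    also have "\<dots> = (\<Sum>t<k*n. S r (t + n) * yy (t + n))"
      by (rule sum.cong) (auto simp: yy_def n)
    also have "\<dots> = (\<Sum>t\<in>{0..<N*n-n}. S r (t + n) * yy (t + n))"
      by (rule sum.mono_neutral_left) (use kn in \<open>auto simp: yy_def\<close>)
    also have "\<dots> = (\<Sum>s\<in>{0+n..<(N*n-n)+n}. S r s * yy s)"
      by (rule sum.shift_bounds_nat_ivl[symmetric])
    also have "\<dots> = (\<Sum>s\<in>{n..<N*n}. S r s * yy s)" 
    proof -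
      have "N*n - n + n = N*n" using r by linarith
      then show ?thesis by simp
    qed
    also have "\<dots> = (\<Sum>s<N*n. if s < n then 0 else S r s * yy s)"
      by (rule sum.mono_neutral_cong_left) auto
    finally show ?thesis .
  qed
  have SAwr: "(SA *\<^sub>v w) $ r = (\<Sum>s<N*n. if s < n then 0 else S r s * w $ s)" if r: "r < N*n" "n \<le> r" for r
  proof -
    have "(SA *\<^sub>v w) $ r = (\<Sum>s<N*n. U r s * w $ s)" using mult_vec_entry[OF SAc wc r(1)] SAe r(1) by simp
    also have "\<dots> = (\<Sum>s<N*n. if s < n then 0 else S r s * w $ s)"
      by (rule sum.cong) (use r in \<open>auto simp: Uf\<close>)
    finally show ?thesis .
  qed
  have uc: "u \<in> carrier_vec (N*n)" by (simp add: u_def)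
  have "SA *\<^sub>v u = 0\<^sub>v (N*n)"
  proof (rule eq_vecI)
    show "dim_vec (SA *\<^sub>v u) = dim_vec (0\<^sub>v (N * n))" using SAc by simp
    fix r assume "r < dim_vec (0\<^sub>v (N * n) :: complex vec)"
    hence r: "r < N*n" by simp
    have e: "(SA *\<^sub>v u) $ r = (\<Sum>s<N*n. U r s * u $ s)" using mult_vec_entry[OF SAc uc r] SAe r by simp
    show "(SA *\<^sub>v u) $ r = 0\<^sub>v (N * n) $ r"
    proof (cases "r < n")
      case True
      have "(\<Sum>s<N*n. U r s * u $ s) = 0"
        by (rule sum.neutral) (use True in \<open>auto simp: Uf Sf u_def\<close>)
      then show ?thesis using e r by simp
    next
      case False
      have "(\<Sum>s<N*n. U r s * u $ s) = (\<Sum>s<N*n. (if s < n then 0 else S r s * w $ s) - (if s < n then 0 else S r s * yy s))"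
        by (rule sum.cong) (use False in \<open>auto simp: Uf u_def algebra_simps\<close>)
      also have "\<dots> = (SA *\<^sub>v w) $ r - (SB *\<^sub>v q) $ r"
        unfolding sum_subtractf using SAwr[of r] SBq[of r] r False by simp
      also have "\<dots> = 0" by (simp add: SAw)
      finally show ?thesis using e r by simp
    qed
  qed
  hence u0: "u = 0\<^sub>v (N*n)" using inj uc by blast
  have wy: "w $ s = yy s" if "n \<le> s" "s < N*n" for s
  proof -
    have "u $ s = 0" using u0 that by simp
    then show ?thesis using that by (simp add: u_def)
  qed
  have wz: "w $ s = 0" if "(k+1)*n \<le> s" "s < N*n" for s
  proof -
    have "n \<le> s" using that by simp
    moreover have "\<not> s - n < k*n" using that by simp
    ultimately show ?thesis using wy that by (simp add: yy_def)
  qed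
  have Tblk: "T (i0*n+a) (j0*n+b) = Gmat (k+1) $$ (j0,i0) * Md (i0+j0+1) $$ (a,b)"
    if ab: "a < n" "b < n" "i0 < k+1" "j0 < k+1" for a b i0 j0
  proof -
    have d1: "(i0*n+a) div n = i0" "(i0*n+a) mod n = a" using ab n by auto
    have d2: "(j0*n+b) div n = j0" "(j0*n+b) mod n = b" using ab n by auto
    have d3: "(j0*n+b+n) div n = j0+1" "(j0*n+b+n) mod n = b" using ab n by auto
    show ?thesis
    proof (cases "i0 = 0")
      case True
      then show ?thesis using ab d2 by (simp add: Tf Gmat_entry)
    next
      case False
      have g1: "\<not> i0*n+a < n" 
      proof -
        have "n \<le> i0*n" using False by simp
        then show ?thesis by linarith
      qed
      have g2: "\<not> j0*n+b+n < n" by simp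
      show ?thesis using ab False g1 g2 d1 d2 d3 by (simp add: Tf Sf Gmat_entry algebra_simps)
    qed
  qed
  have Mde: "Md d $$ (a,b) = (\<Sum>m\<in>{1..p}. (deriv ^^ d) (f m) 0 * A m $$ (a,b))" if "a < n" "b < n" for a b d
  proof -
    have "Md d $$ (a,b) = (\<Sum>m\<in>{1..p}. ((deriv ^^ d) (f m) 0 \<cdot>\<^sub>m A m) $$ (a,b))"
      unfolding Md_def Mder_def msum_def using that by simp
    also have "\<dots> = (\<Sum>m\<in>{1..p}. (deriv ^^ d) (f m) 0 * A m $$ (a,b))"
    proof (rule sum.cong[OF refl])
      fix m assume "m \<in> {1..p}"
      then have "dim_row (A m) = n" "dim_col (A m) = n" using Adim by auto
      then show "((deriv ^^ d) (f m) 0 \<cdot>\<^sub>m A m) $$ (a,b) = (deriv ^^ d) (f m) 0 * A m $$ (a,b)"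
        using that by simp
    qed
    finally show ?thesis .
  qed
  have Wc: "W \<in> carrier_mat n (k+1)" by (simp add: W_def block_cols_def)
  have part2: "Z = msum n (k + 1) (\<lambda>m. A m * W * (Gmat (k + 1) \<circ>\<^sub>h Fmat (k + 1) (f m))) {1..p}"
  proof (rule eq_matI)
    show "dim_row Z = dim_row (msum n (k + 1) (\<lambda>m. A m * W * (Gmat (k + 1) \<circ>\<^sub>h Fmat (k + 1) (f m))) {1..p})"
      by (simp add: Z_def block_cols_def msum_def)
    show "dim_col Z = dim_col (msum n (k + 1) (\<lambda>m. A m * W * (Gmat (k + 1) \<circ>\<^sub>h Fmat (k + 1) (f m))) {1..p})"
      by (simp add: Z_def block_cols_def msum_def)
    fix a i0 assume "a < dim_row (msum n (k + 1) (\<lambda>m. A m * W * (Gmat (k + 1) \<circ>\<^sub>h Fmat (k + 1) (f m))) {1..p})"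
      "i0 < dim_col (msum n (k + 1) (\<lambda>m. A m * W * (Gmat (k + 1) \<circ>\<^sub>h Fmat (k + 1) (f m))) {1..p})"
    hence ai: "a < n" "i0 < k+1" by (auto simp: msum_def)
    define X where "X m j0 b = Gmat (k+1) $$ (j0,i0) * (deriv ^^ (i0+j0+1)) (f m) 0 * A m $$ (a,b) * w $ (j0*n+b)"
      for m j0 b
    have r: "i0*n+a < N*n"
    proof -
      have "i0*n+a < (i0+1)*n" using ai by simp
      also have "\<dots> \<le> N*n" using ai kN by (intro mult_le_mono1) simp
      finally show ?thesis .
    qed
    have kn2: "(k+1)*n \<le> N*n" using kN by (intro mult_le_mono1) simp
    have "Z $$ (a, i0) = z $ (i0*n+a)" using ai by (simp add: Z_def block_cols_def)
    also have "\<dots> = (\<Sum>s<N*n. T (i0*n+a) s * w $ s)"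
      unfolding z_def using mult_vec_entry[OF SBc wc r] SBe r by simp
    also have "\<dots> = (\<Sum>s<(k+1)*n. T (i0*n+a) s * w $ s)"
      by (rule sum.mono_neutral_right) (use kn2 wz in auto)
    also have "\<dots> = (\<Sum>j0<k+1. \<Sum>b<n. T (i0*n+a) (j0*n+b) * w $ (j0*n+b))"
      by (rule sum_blocks)
    also have "\<dots> = (\<Sum>j0<k+1. \<Sum>b<n. \<Sum>m\<in>{1..p}. X m j0 b)"
    proof (intro sum.cong refl)
      fix j0 b assume j0: "j0 \<in> {..<k+1}" and b: "b \<in> {..<n}"
      show "T (i0*n+a) (j0*n+b) * w $ (j0*n+b) = (\<Sum>m\<in>{1..p}. X m j0 b)"
      proof -
        have t: "T (i0*n+a) (j0*n+b) = Gmat (k+1) $$ (j0,i0) * Md (i0+j0+1) $$ (a,b)"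
          using Tblk[of a b i0 j0] j0 b ai by simp
        have md: "Md (i0+j0+1) $$ (a,b) = (\<Sum>m\<in>{1..p}. (deriv ^^ (i0+j0+1)) (f m) 0 * A m $$ (a,b))"
          using Mde[of a b] b ai by simp
        show ?thesis unfolding t md X_def sum_distrib_left sum_distrib_right
          by (intro sum.cong refl) (simp add: algebra_simps)
      qed
    qed
    also have "\<dots> = (\<Sum>m\<in>{1..p}. \<Sum>j0<k+1. \<Sum>b<n. X m j0 b)"
      by (subst sum.swap) (subst (2) sum.swap, rule refl)
    also have "\<dots> = (\<Sum>m\<in>{1..p}. (A m * W * (Gmat (k + 1) \<circ>\<^sub>h Fmat (k + 1) (f m))) $$ (a, i0))"
    proof (rule sum.cong[OF refl])
      fix m assume m: "m \<in> {1..p}"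
      have Am: "A m \<in> carrier_mat n n" using Adim m .
      have Hc: "Gmat (k + 1) \<circ>\<^sub>h Fmat (k + 1) (f m) \<in> carrier_mat (k+1) (k+1)"
        by (simp add: hadamard_def Gmat_def)
      have AW: "A m * W \<in> carrier_mat n (k+1)" using Am Wc by simp
      have "(A m * W * (Gmat (k + 1) \<circ>\<^sub>h Fmat (k + 1) (f m))) $$ (a, i0)
          = (\<Sum>j0<k+1. (A m * W) $$ (a, j0) * (Gmat (k + 1) \<circ>\<^sub>h Fmat (k + 1) (f m)) $$ (j0, i0))"
        by (rule mult_mat_entry[OF AW Hc ai])
      also have "\<dots> = (\<Sum>j0<k+1. \<Sum>b<n. X m j0 b)"
      proof (rule sum.cong[OF refl])
        fix j0 assume j0: "j0 \<in> {..<k+1}"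
        have "(A m * W) $$ (a, j0) = (\<Sum>b<n. A m $$ (a, b) * W $$ (b, j0))"
          using mult_mat_entry[OF Am Wc ai(1)] j0 by simp
        also have "\<dots> = (\<Sum>b<n. A m $$ (a, b) * w $ (j0*n+b))"
          using j0 by (intro sum.cong refl) (simp add: W_def block_cols_def)
        finally have e1: "(A m * W) $$ (a, j0) = (\<Sum>b<n. A m $$ (a, b) * w $ (j0*n+b))" .
        have e2: "(Gmat (k + 1) \<circ>\<^sub>h Fmat (k + 1) (f m)) $$ (j0, i0) =
            Gmat (k+1) $$ (j0,i0) * (deriv ^^ (i0+j0+1)) (f m) 0"
          using j0 ai by (simp add: hadamard_def Gmat_def Fmat_def add.commute)
        show "(A m * W) $$ (a, j0) * (Gmat (k + 1) \<circ>\<^sub>h Fmat (k + 1) (f m)) $$ (j0, i0) = (\<Sum>b<n. X m j0 b)"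
          unfolding e1 e2 X_def sum_distrib_right by (intro sum.cong refl) (simp add: algebra_simps)
      qed
      finally show "(\<Sum>j0<k+1. \<Sum>b<n. X m j0 b) = (A m * W * (Gmat (k + 1) \<circ>\<^sub>h Fmat (k + 1) (f m))) $$ (a, i0)"
        by (simp only: eq_commute)
    qed
    also have "\<dots> = msum n (k + 1) (\<lambda>m. A m * W * (Gmat (k + 1) \<circ>\<^sub>h Fmat (k + 1) (f m))) {1..p} $$ (a, i0)"
      unfolding msum_def using ai by simp
    finally show "Z $$ (a, i0) = msum n (k + 1) (\<lambda>m. A m * W * (Gmat (k + 1) \<circ>\<^sub>h Fmat (k + 1) (f m))) {1..p} $$ (a, i0)" .
  qed
  show ?thesis using wz part2
    by (simp add: Let_def Md_def S_def U_def T_def SA_def SB_def w_def W_def z_def Z_def)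
qed

end
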